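(* Let $c>0$ and consider the space of variables $(\rho,u,v,p,e,dx,dy)$, with $q^{2}=u^{2}+v^{2}<c^{2}$, where $dx,dy$ are treated as independent coordinates. Put $\Gamma=1/\sqrt{c^{2}-q^{2}}$ and $S=(e+p)\Gamma^{2}$. For a real parameter $\epsilon$ (where all expressions are defined) define $T_\epsilon:(\rho,u,v,p,e,dx,dy)\mapsto(\rho^{*},u^{*},v^{*},p^{*},e^{*},dx^{*},dy^{*})$ by \[ u^{*}=\frac{u}{\epsilon p+1},\quad v^{*}=\frac{v}{\epsilon p+1},\quad p^{*}=\frac{p}{\epsilon p+1},\quad \rho^{*}=\rho c\Gamma\sqrt{\tilde\Delta}\,\frac{\epsilon p+1}{\epsilon(p+Sq^{2})+1}, \] \[ e^{*}=\frac{c^{2}(\epsilon p+1)(e+p)\tilde\Delta}{(\epsilon p+1)(c^{2}-q^{2})+\epsilon(e+p)q^{2}}-\frac{p}{\epsilon p+1},\qquad \tilde\Delta=1-\frac{q^{2}}{c^{2}(\epsilon p+1)^{2}}, \] \[ dx^{*}=\epsilon\big((p+Sv^{2})\,dx-Suv\,dy\big)+dx,\qquad dy^{*}=\epsilon\big(-Suv\,dx+(p+Su^{2})\,dy\big)+dy. \] (This is the subclass, with $a_1=-\epsilon^{-1}$, $a_2=a_4=\epsilon^{-1}$, $a_3=1$ and after rescaling $x^*\to a_1x^*$, $y^*\to a_1y^*$, of reciprocal transformations leaving invariant the two-dimensional steady relativistic gasdynamic system $\partial_x(Ru)+\partial_y(Rv)=0$, $\partial_x(p+Su^2)+\partial_y(Suv)=0$,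 $\partial_x(Suv)+\partial_y(p+Sv^2)=0$, $\partial_x(Su)+\partial_y(Sv)=0$, $R=\rho\Gamma$.) Then $\{T_\epsilon\}$ is a one-parameter Lie group of transformations with infinitesimal generator \[ X=-\rho eq^{2}\Gamma^{2}\partial_{\rho}-pu\,\partial_{u}-pv\,\partial_{v}-p^{2}\partial_{p}+(c^{2}p^{2}-e^{2}q^{2})\Gamma^{2}\partial_{e} \] \[ +\Big(((c^{2}-u^{2})p+ev^{2})\,dx-uv(e+p)\,dy\Big)\Gamma^{2}\partial_{dx}+\Big(((c^{2}-v^{2})p+eu^{2})\,dy-uv(e+p)\,dx\Big)\Gamma^{2}\partial_{dy}, \] that is, with $q^{*2}=u^{*2}+v^{*2}$, the transformed quantities satisfy the Cauchy problem \[ \frac{d\rho^{*}}{d\epsilon}=-\frac{\rho^{*}e^{*}q^{*2}}{c^{2}-q^{*2}},\quad \frac{du^{*}}{d\epsilon}=-p^{*}u^{*},\quad \frac{dv^{*}}{d\epsilon}=-p^{*}v^{*},\quad \frac{dp^{*}}{d\epsilon}=-p^{*2},\quad \frac{de^{*}}{d\epsilon}=\frac{c^{2}p^{*2}-q^{*2}e^{*2}}{c^{2}-q^{*2}}, \] \[ \frac{d(dx^{*})}{d\epsilon}=\frac{((c^{2}-u^{*2})p^{*}+e^{*}v^{*2})dx^{*}-u^{*}v^{*}(e^{*}+p^{*})dy^{*}}{c^{2}-q^{*2}},\quad \frac{d(dy^{*})}{d\epsilon}=\frac{((c^{2}-v^{*2})p^{*}+e^{*}u^{*2})dy^{*}-u^{*}v^{*}(e^{*}+p^{*})dx^{*}}{c^{2}-q^{*2}},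 \] with initial data at $\epsilon=0$ equal to $(\rho,u,v,p,e,dx,dy)$.
   Context: $c$ is the speed of light; $\rho$, $(u,v)$, $p$, $e$ are density, velocity components, pressure and energy density. The differentials $dx,dy$ are regarded as additional coordinates acted on by the transformations. A one-parameter Lie group of transformations is a family $T_\epsilon$ with $T_0=\mathrm{id}$ and $T_{\epsilon_1}\circ T_{\epsilon_2}=T_{\epsilon_1+\epsilon_2}$; its infinitesimal generator is the vector field of $\epsilon$-derivatives at $\epsilon=0$. *)

theory Defs
  imports "HOL-Analysis.Analysis"
begin

type_synonym state = "real \<times> real \<times> real \<times> real \<times> real \<times> real \<times> real"

definition admissible :: "real \<Rightarrow> state \<Rightarrow> bool" where
  "admissible c z = (case z of (\<rho>, u, v, p, e, dx, dy) \<Rightarrow> u\<^sup>2 + v\<^sup>2 < c\<^sup>2)"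

definition Dtil :: "real \<Rightarrow> real \<Rightarrow> state \<Rightarrow> real" where
  "Dtil c \<epsilon> z = (case z of (\<rho>, u, v, p, e, dx, dy) \<Rightarrow>
      1 - (u\<^sup>2 + v\<^sup>2) / (c\<^sup>2 * (\<epsilon> * p + 1)\<^sup>2))"

definition T :: "real \<Rightarrow> real \<Rightarrow> state \<Rightarrow> state" where
  "T c \<epsilon> z = (case z of (\<rho>, u, v, p, e, dx, dy) \<Rightarrow>
     (let q2 = u\<^sup>2 + v\<^sup>2; \<Gamma> = 1 / sqrt (c\<^sup>2 - q2); S = (e + p) * \<Gamma>\<^sup>2;
          D = 1 - q2 / (c\<^sup>2 * (\<epsilon> * p + 1)\<^sup>2) in
      (\<rho> * c * \<Gamma> * sqrt D * ((\<epsilon> * p + 1) / (\<epsilon> * (p + S * q2) + 1)),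
       u / (\<epsilon> * p + 1),
       v / (\<epsilon> * p + 1),
       p / (\<epsilon> * p + 1),
       c\<^sup>2 * (\<epsilon> * p + 1) * (e + p) * D / ((\<epsilon> * p + 1) * (c\<^sup>2 - q2) + \<epsilon> * (e + p) * q2)
         - p / (\<epsilon> * p + 1),
       \<epsilon> * ((p + S * v\<^sup>2) * dx - S * u * v * dy) + dx,
       \<epsilon> * (- S * u * v * dx + (p + S * u\<^sup>2) * dy) + dy)))"

text \<open>The values of eps for which all expressions in T_eps z are defined
  (nonzero denominators) and T_eps z lies again in the phase space (Dtil > 0,
  equivalently q*^2 < c^2).\<close>
definition eps_dom :: "real \<Rightarrow> state \<Rightarrow> real \<Rightarrow> bool" where
  "eps_dom c z \<epsilon> = (case z of (\<rho>, u, v, p, e, dx, dy) \<Rightarrow>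
     (let q2 = u\<^sup>2 + v\<^sup>2; S = (e + p) / (c\<^sup>2 - q2) in
      \<epsilon> * p + 1 \<noteq> 0 \<and> \<epsilon> * (p + S * q2) + 1 \<noteq> 0
      \<and> (\<epsilon> * p + 1) * (c\<^sup>2 - q2) + \<epsilon> * (e + p) * q2 \<noteq> 0
      \<and> Dtil c \<epsilon> z > 0))"

text \<open>The infinitesimal generator X, as a vector field (components along
  d/drho, d/du, d/dv, d/dp, d/de, d/d(dx), d/d(dy)).\<close>
definition X :: "real \<Rightarrow> state \<Rightarrow> state" where
  "X c z = (case z of (\<rho>, u, v, p, e, dx, dy) \<Rightarrow>
     (let q2 = u\<^sup>2 + v\<^sup>2; \<Gamma>2 = 1 / (c\<^sup>2 - q2) in
      (- \<rho> * e * q2 * \<Gamma>2,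
       - p * u,
       - p * v,
       - p\<^sup>2,
       (c\<^sup>2 * p\<^sup>2 - e\<^sup>2 * q2) * \<Gamma>2,
       (((c\<^sup>2 - u\<^sup>2) * p + e * v\<^sup>2) * dx - u * v * (e + p) * dy) * \<Gamma>2,
       (((c\<^sup>2 - v\<^sup>2) * p + e * u\<^sup>2) * dy - u * v * (e + p) * dx) * \<Gamma>2)))"

end

theory Submission
  imports Defs
begin

lemma alg_E:
  fixes c p e Q t k M :: real
  assumes k: "k \<noteq> 0" and M: "M \<noteq> 0" and B: "c\<^sup>2*k\<^sup>2 - Q \<noteq> 0"
   and kd: "k = t*p+1" and Md: "M = k*(c\<^sup>2 - Q) + t*(e+p)*Q"
  shows "(2*(p*k)*c\<^sup>2*(e+p)*(k*M) - (e+p)*(c\<^sup>2*k\<^sup>2 - Q)*(p*M + (p*(c\<^sup>2 - Q) + (e+p)*Q)*k))/((k*M)*(k*M))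
     + p*p/(k*k) =
     (c\<^sup>2 * (p / k)\<^sup>2 - ((e + p) * (c\<^sup>2 * k\<^sup>2 - Q) / (k * M) - p / k)\<^sup>2 * (Q / k\<^sup>2)) /
     (c\<^sup>2 - Q / k\<^sup>2)"
proof -
  have B': "c\<^sup>2 - Q / k\<^sup>2 = (c\<^sup>2*k\<^sup>2 - Q)/k\<^sup>2" using k by (simp add: field_simps)
  have E': "(e + p) * (c\<^sup>2 * k\<^sup>2 - Q) / (k * M) - p / k = ((e + p) * (c\<^sup>2 * k\<^sup>2 - Q) - p*M)/(k*M)"
    using k M by (simp add: field_simps)
  show ?thesis unfolding B' E' using k M B
    apply (simp add: field_simps power2_eq_square)
    unfolding Md kd by algebra
qed

lemma E_deriv:
  fixes c p e Q t :: real
  assumes k: "t*p+1 \<noteq> 0"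
    and M: "(t*p+1)*(c\<^sup>2 - Q) + t*(e+p)*Q \<noteq> 0"
    and B: "c\<^sup>2*(t*p+1)\<^sup>2 - Q > 0"
  shows "((\<lambda>t. (e+p)*(c\<^sup>2*(t*p+1)\<^sup>2-Q)/((t*p+1)*((t*p+1)*(c\<^sup>2 - Q) + t*(e+p)*Q)) - p/(t*p+1)) has_real_derivative
     (c\<^sup>2*(p/(t*p+1))\<^sup>2 - ((e+p)*(c\<^sup>2*(t*p+1)\<^sup>2-Q)/((t*p+1)*((t*p+1)*(c\<^sup>2 - Q) + t*(e+p)*Q)) - p/(t*p+1))\<^sup>2*(Q/(t*p+1)\<^sup>2))/(c\<^sup>2 - Q/(t*p+1)\<^sup>2)) (at t)"
  apply (rule derivative_eq_intros refl)+
    apply (use k M in simp)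
   apply (rule derivative_eq_intros refl)+
   apply (use k M in simp)
  apply (rule derivative_eq_intros refl)+
  using alg_E[of "t*p+1" "(t*p+1)*(c\<^sup>2 - Q) + t*(e+p)*Q" c Q t p e] k M B
  by (simp add: power2_eq_square)
lemma quot_deriv:
  fixes g :: "real \<Rightarrow> real"
  assumes g: "(g has_real_derivative g') (at t)"
    and M: "(t*p+1)*A + t*w*Q \<noteq> 0"
  shows "((\<lambda>t. Cf * g t * (t*p+1) / ((t*p+1)*A + t*w*Q)) has_real_derivative
     ((Cf*g'*(t*p+1) + p*(Cf*g t)) * ((t*p+1)*A + t*w*Q) - Cf*g t*(t*p+1)*(p*A + w*Q))
       / (((t*p+1)*A + t*w*Q) * ((t*p+1)*A + t*w*Q))) (at t)"
  apply (rule derivative_eq_intros refl g)+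
  using M by (simp_all add: algebra_simps)

lemma alg_R:
  fixes c p e Q t k M r0 Cf :: real
  assumes k: "k \<noteq> 0" and M: "M \<noteq> 0" and B: "c\<^sup>2*k\<^sup>2 - Q \<noteq> 0" and c: "c \<noteq> 0"
   and kd: "k = t*p+1" and Md: "M = k*(c\<^sup>2 - Q) + t*(e+p)*Q"
   and r0: "r0 \<noteq> 0" and ss: "r0 * r0 = 1 - Q/(c\<^sup>2*k\<^sup>2)"
  shows "((Cf*(inverse r0 / 2 * (2*Q*p/(c\<^sup>2*k^3)))*k + p*(Cf*r0)) * M - Cf*r0*k*(p*(c\<^sup>2 - Q) + (e+p)*Q))
       / (M * M) = 
     -(Cf * r0 * k / M) * ((e+p)*(c\<^sup>2*k\<^sup>2-Q)/(k*M) - p/k) * (Q/k\<^sup>2) / (c\<^sup>2 - Q/k\<^sup>2)"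
proof -
  have B': "c\<^sup>2 - Q / k\<^sup>2 = (c\<^sup>2*k\<^sup>2 - Q)/k\<^sup>2" using k by (simp add: field_simps)
  have E': "(e + p) * (c\<^sup>2 * k\<^sup>2 - Q) / (k * M) - p / k = ((e + p) * (c\<^sup>2 * k\<^sup>2 - Q) - p*M)/(k*M)"
    using k M by (simp add: field_simps)
  have inv: "inverse r0 = r0 / (1 - Q/(c\<^sup>2*k\<^sup>2))" using r0 ss B c k by (simp add: field_simps)
  have D': "1 - Q/(c\<^sup>2*k\<^sup>2) = (c\<^sup>2*k\<^sup>2 - Q)/(c\<^sup>2*k\<^sup>2)" using k c by (simp add: field_simps)
  show ?thesis unfolding B' E' inv D' using k M B c
    apply (simp add: field_simps power2_eq_square power3_eq_cube)
    unfolding Md kd by algebra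
qed

lemma R_deriv:
  fixes c p e Q t Cf :: real
  assumes c: "c > 0" and k: "t*p+1 \<noteq> 0"
    and M: "(t*p+1)*(c\<^sup>2 - Q) + t*(e+p)*Q \<noteq> 0"
    and B: "c\<^sup>2*(t*p+1)\<^sup>2 - Q > 0"
  shows "((\<lambda>t. Cf * sqrt (1 - Q/(c\<^sup>2*(t*p+1)\<^sup>2)) * (t*p+1) / ((t*p+1)*(c\<^sup>2 - Q) + t*(e+p)*Q)) has_real_derivative
     -(Cf * sqrt (1 - Q/(c\<^sup>2*(t*p+1)\<^sup>2)) * (t*p+1) / ((t*p+1)*(c\<^sup>2 - Q) + t*(e+p)*Q))
      * ((e+p)*(c\<^sup>2*(t*p+1)\<^sup>2-Q)/((t*p+1)*((t*p+1)*(c\<^sup>2 - Q) + t*(e+p)*Q)) - p/(t*p+1))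
      * (Q/(t*p+1)\<^sup>2) / (c\<^sup>2 - Q/(t*p+1)\<^sup>2)) (at t)"
proof -
  define kk where "kk = t*p+1"
  have k0: "kk \<noteq> 0" using k kk_def by simp
  define Df where "Df = (\<lambda>t. 1 - Q/(c\<^sup>2*(t*p+1)\<^sup>2))"
  have Dpos: "Df t > 0" unfolding Df_def using B k c
    by (simp add: field_simps)
  have dD: "(Df has_real_derivative 2*Q*p/(c\<^sup>2*(t*p+1)^3)) (at t)"
    unfolding Df_def
    apply (rule derivative_eq_intros refl)+
    apply (use k c in simp)
    apply (rule derivative_eq_intros refl)+
    unfolding kk_def[symmetric]
    using k0 c by (simp add: field_simps power2_eq_square power3_eq_cube)
  have dS: "((\<lambda>t. sqrt (Df t)) has_real_derivative inverse (sqrt (Df t)) / 2 * (2*Q*p/(c\<^sup>2*(t*p+1)^3))) (at t)"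
    using DERIV_chain[OF DERIV_real_sqrt[OF Dpos] dD] by (simp add: o_def)
  have q: "((\<lambda>t. Cf * sqrt (Df t) * (t*p+1) / ((t*p+1)*(c\<^sup>2 - Q) + t*(e+p)*Q)) has_real_derivative
     ((Cf*(inverse (sqrt (Df t)) / 2 * (2*Q*p/(c\<^sup>2*(t*p+1)^3)))*(t*p+1) + p*(Cf* sqrt (Df t))) * ((t*p+1)*(c\<^sup>2 - Q) + t*(e+p)*Q) - Cf* sqrt (Df t)*(t*p+1)*(p*(c\<^sup>2 - Q) + (e+p)*Q))
       / (((t*p+1)*(c\<^sup>2 - Q) + t*(e+p)*Q) * ((t*p+1)*(c\<^sup>2 - Q) + t*(e+p)*Q))) (at t)"
    by (rule quot_deriv[OF dS M])
  have ss: "sqrt (Df t) * sqrt (Df t) = Df t" using Dpos by simp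
  have s0: "sqrt (Df t) \<noteq> 0" using Dpos by simp
  have B0: "c\<^sup>2*(t*p+1)\<^sup>2 - Q \<noteq> 0" using B by simp
  have c0: "c \<noteq> 0" using c by simp
  show ?thesis
    using q unfolding Df_def
    unfolding alg_R[OF k M B0 c0 refl refl s0[unfolded Df_def] ss[unfolded Df_def]] .
qed
lemma alg_DX:
  fixes c p e u v t k M dx dy :: real
  assumes k: "k \<noteq> 0" and M: "M \<noteq> 0" and B: "c\<^sup>2 * k\<^sup>2 - (u\<^sup>2 + v\<^sup>2) \<noteq> 0"
   and A: "c\<^sup>2 - (u\<^sup>2 + v\<^sup>2) > 0"
   and kd: "k = t * p + 1" and Md: "M = k * (c\<^sup>2 - (u\<^sup>2 + v\<^sup>2)) + t * (e + p) * (u\<^sup>2 + v\<^sup>2)"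
  defines "S \<equiv> (e + p) / (c\<^sup>2 - (u\<^sup>2 + v\<^sup>2))"
  defines "E \<equiv> (e + p) * (c\<^sup>2 * k\<^sup>2 - (u\<^sup>2 + v\<^sup>2)) / (k * M) - p / k"
  shows "(p + S * v\<^sup>2) * dx - S * u * v * dy =
    (((c\<^sup>2 - (u / k)\<^sup>2) * (p / k) + E * (v / k)\<^sup>2) * (t * ((p + S * v\<^sup>2) * dx - S * u * v * dy) + dx)
      - u / k * (v / k) * (E + p / k) * (t * (- S * u * v * dx + (p + S * u\<^sup>2) * dy) + dy))
     * (1 / (c\<^sup>2 - ((u / k)\<^sup>2 + (v / k)\<^sup>2)))"
proof -
  define w where "w = e + p"
  define B0 where "B0 = c\<^sup>2 * k\<^sup>2 - (u\<^sup>2 + v\<^sup>2)"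
  define A0 where "A0 = c\<^sup>2 - (u\<^sup>2 + v\<^sup>2)"
  have Apos: "A0 \<noteq> 0" using A A0_def by simp
  have B0n: "B0 \<noteq> 0" using B B0_def by simp
  have S': "S = w / A0" unfolding S_def w_def A0_def ..
  have E': "E = (w * B0 - p * M) / (k * M)"
    unfolding E_def w_def B0_def using k M by (simp add: field_simps)
  have h1: "(c\<^sup>2 - (u / k)\<^sup>2) * (p / k) + E * (v / k)\<^sup>2 = B0 * (p * M + v\<^sup>2 * w) / (k^3 * M)"
    unfolding E' using k M unfolding B0_def by (simp add: field_simps power2_eq_square power3_eq_cube; algebra)
  have h2: "u / k * (v / k) * (E + p / k) = u * v * w * B0 / (k^3 * M)"
    unfolding E' using k M by (simp add: field_simps power2_eq_square power3_eq_cube)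
  have h3: "1 / (c\<^sup>2 - ((u / k)\<^sup>2 + (v / k)\<^sup>2)) = k\<^sup>2 / B0"
    unfolding B0_def using k by (simp add: field_simps)
  have h4: "\<And>X Y. (B0 * (p * M + v\<^sup>2 * w) / (k^3 * M) * X - u * v * w * B0 / (k^3 * M) * Y) * (k\<^sup>2 / B0)
     = ((p * M + v\<^sup>2 * w) * X - u * v * w * Y) / (k * M)"
    using k M B0n by (simp add: field_simps power2_eq_square power3_eq_cube)
  have Md': "M = k * A0 + t * w * (u\<^sup>2 + v\<^sup>2)" unfolding Md A0_def w_def ..
  show ?thesis unfolding h1 h2 h3 h4 S' using k M Apos
    apply (simp add: field_simps)
    unfolding Md' kd by algebra
qed

lemma alg_DY:
  fixes c p e u v t k M dx dy :: real
  assumes k: "k \<noteq> 0" and M: "M \<noteq> 0" and B: "c\<^sup>2 * k\<^sup>2 - (u\<^sup>2 + v\<^sup>2) \<noteq> 0"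
   and A: "c\<^sup>2 - (u\<^sup>2 + v\<^sup>2) > 0"
   and kd: "k = t * p + 1" and Md: "M = k * (c\<^sup>2 - (u\<^sup>2 + v\<^sup>2)) + t * (e + p) * (u\<^sup>2 + v\<^sup>2)"
  defines "S \<equiv> (e + p) / (c\<^sup>2 - (u\<^sup>2 + v\<^sup>2))"
  defines "E \<equiv> (e + p) * (c\<^sup>2 * k\<^sup>2 - (u\<^sup>2 + v\<^sup>2)) / (k * M) - p / k"
  shows "- S * u * v * dx + (p + S * u\<^sup>2) * dy =
    (((c\<^sup>2 - (v / k)\<^sup>2) * (p / k) + E * (u / k)\<^sup>2) * (t * (- S * u * v * dx + (p + S * u\<^sup>2) * dy) + dy)
      - u / k * (v / k) * (E + p / k) * (t * ((p + S * v\<^sup>2) * dx - S * u * v * dy) + dx))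
     * (1 / (c\<^sup>2 - ((u / k)\<^sup>2 + (v / k)\<^sup>2)))"
proof -
  define w where "w = e + p"
  define B0 where "B0 = c\<^sup>2 * k\<^sup>2 - (u\<^sup>2 + v\<^sup>2)"
  define A0 where "A0 = c\<^sup>2 - (u\<^sup>2 + v\<^sup>2)"
  have Apos: "A0 \<noteq> 0" using A A0_def by simp
  have B0n: "B0 \<noteq> 0" using B B0_def by simp
  have S': "S = w / A0" unfolding S_def w_def A0_def ..
  have E': "E = (w * B0 - p * M) / (k * M)"
    unfolding E_def w_def B0_def using k M by (simp add: field_simps)
  have h1: "(c\<^sup>2 - (v / k)\<^sup>2) * (p / k) + E * (u / k)\<^sup>2 = B0 * (p * M + u\<^sup>2 * w) / (k^3 * M)"
    unfolding E' using k M unfolding B0_def by (simp add: field_simps power2_eq_square power3_eq_cube; algebra)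
  have h2: "u / k * (v / k) * (E + p / k) = u * v * w * B0 / (k^3 * M)"
    unfolding E' using k M by (simp add: field_simps power2_eq_square power3_eq_cube)
  have h3: "1 / (c\<^sup>2 - ((u / k)\<^sup>2 + (v / k)\<^sup>2)) = k\<^sup>2 / B0"
    unfolding B0_def using k by (simp add: field_simps)
  have h4: "\<And>X Y. (B0 * (p * M + u\<^sup>2 * w) / (k^3 * M) * X - u * v * w * B0 / (k^3 * M) * Y) * (k\<^sup>2 / B0)
     = ((p * M + u\<^sup>2 * w) * X - u * v * w * Y) / (k * M)"
    using k M B0n by (simp add: field_simps power2_eq_square power3_eq_cube)
  have Md': "M = k * A0 + t * w * (u\<^sup>2 + v\<^sup>2)" unfolding Md A0_def w_def ..
  show ?thesis unfolding h1 h2 h3 h4 S' using k M Apos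
    apply (simp add: field_simps)
    unfolding Md' kd by algebra
qed
lemma T_closed:
  fixes c t \<rho> u v p e dx dy :: real
  assumes c: "c > 0" and A: "u\<^sup>2 + v\<^sup>2 < c\<^sup>2"
  shows "T c t (\<rho>, u, v, p, e, dx, dy) =
   (\<rho> * c * sqrt (c\<^sup>2 - (u\<^sup>2 + v\<^sup>2)) * sqrt (1 - (u\<^sup>2 + v\<^sup>2) / (c\<^sup>2 * (t * p + 1)\<^sup>2)) * (t * p + 1)
       / ((t * p + 1) * (c\<^sup>2 - (u\<^sup>2 + v\<^sup>2)) + t * (e + p) * (u\<^sup>2 + v\<^sup>2)),
    u / (t * p + 1), v / (t * p + 1), p / (t * p + 1),
    (e + p) * (c\<^sup>2 * (t * p + 1)\<^sup>2 - (u\<^sup>2 + v\<^sup>2)) / ((t * p + 1) * ((t * p + 1) * (c\<^sup>2 - (u\<^sup>2 + v\<^sup>2)) + t * (e + p) * (u\<^sup>2 + v\<^sup>2))) - p / (t * p + 1),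
    t * ((p + (e + p) / (c\<^sup>2 - (u\<^sup>2 + v\<^sup>2)) * v\<^sup>2) * dx - (e + p) / (c\<^sup>2 - (u\<^sup>2 + v\<^sup>2)) * u * v * dy) + dx,
    t * (- ((e + p) / (c\<^sup>2 - (u\<^sup>2 + v\<^sup>2))) * u * v * dx + (p + (e + p) / (c\<^sup>2 - (u\<^sup>2 + v\<^sup>2)) * u\<^sup>2) * dy) + dy)"
proof -
  define Q where "Q = u\<^sup>2 + v\<^sup>2"
  define A0 where "A0 = c\<^sup>2 - Q"
  define k where "k = t * p + 1"
  define M where "M = k * A0 + t * (e + p) * Q"
  have A0: "A0 > 0" using A unfolding A0_def Q_def by simp
  have sA: "sqrt A0 * sqrt A0 = A0" using A0 by simp
  have sA0: "sqrt A0 \<noteq> 0" using A0 by simp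
  have S: "(e + p) * (1 / sqrt A0)\<^sup>2 = (e + p) / A0" using A0 by (simp add: power_divide)
  have R: "\<rho> * c * (1 / sqrt A0) * sqrt D * (k / (t * (p + (e + p) / A0 * Q) + 1))
     = \<rho> * c * sqrt A0 * sqrt D * k / M" for D
  proof -
    have "t * (p + (e + p) / A0 * Q) + 1 = (M - k * A0 + A0 * (t * p + 1)) / A0"
      unfolding M_def using A0 by (simp add: field_simps)
    also have "\<dots> = M / A0" unfolding k_def by simp
    finally have h: "t * (p + (e + p) / A0 * Q) + 1 = M / A0" .
    show ?thesis
    proof (cases "M = 0")
      case True then show ?thesis unfolding h by simp
    next
      case False
      have s1: "1 / sqrt A0 * A0 = sqrt A0" using sA sA0 by (simp add: field_simps)
      have "\<rho> * c * (1 / sqrt A0) * sqrt D * (k / (M / A0)) = \<rho> * c * sqrt D * k / M * (1 / sqrt A0 * A0)"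
        using False sA0 A0 by (simp add: field_simps)
      then show ?thesis unfolding h s1 by simp
    qed
  qed
  have E: "c\<^sup>2 * k * (e + p) * (1 - Q / (c\<^sup>2 * k\<^sup>2)) / (k * A0 + t * (e + p) * Q) - p / k
     = (e + p) * (c\<^sup>2 * k\<^sup>2 - Q) / (k * M) - p / k"
  proof (cases "k = 0 \<or> M = 0")
    case True then show ?thesis unfolding M_def by auto
  next
    case False then show ?thesis using c unfolding M_def[symmetric] by (simp add: field_simps power2_eq_square)
  qed
  show ?thesis
    unfolding T_def Let_def prod.case
    unfolding S[unfolded A0_def Q_def] R[unfolded A0_def Q_def M_def k_def] E[unfolded A0_def Q_def M_def k_def] ..
qed
lemma key_DX:
  fixes c p e u v t dx dy :: real
  assumes A: "c\<^sup>2 - (u\<^sup>2 + v\<^sup>2) \<noteq> 0"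
  defines "S \<equiv> (e + p) / (c\<^sup>2 - (u\<^sup>2 + v\<^sup>2))"
  defines "M \<equiv> (t * p + 1) * (c\<^sup>2 - (u\<^sup>2 + v\<^sup>2)) + t * (e + p) * (u\<^sup>2 + v\<^sup>2)"
  defines "Cx \<equiv> (p + S * v\<^sup>2) * dx - S * u * v * dy"
  defines "Cy \<equiv> - S * u * v * dx + (p + S * u\<^sup>2) * dy"
  shows "(p * M + v\<^sup>2 * (e + p)) * (t * Cx + dx) - u * v * (e + p) * (t * Cy + dy) = (t * p + 1) * M * Cx"
proof -
  have hS: "S * (c\<^sup>2 - (u\<^sup>2 + v\<^sup>2)) = e + p" unfolding S_def using A by simp
  show ?thesis unfolding Cx_def Cy_def M_def using hS by algebra
qed

lemma key_DY:
  fixes c p e u v t dx dy :: real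
  assumes A: "c\<^sup>2 - (u\<^sup>2 + v\<^sup>2) \<noteq> 0"
  defines "S \<equiv> (e + p) / (c\<^sup>2 - (u\<^sup>2 + v\<^sup>2))"
  defines "M \<equiv> (t * p + 1) * (c\<^sup>2 - (u\<^sup>2 + v\<^sup>2)) + t * (e + p) * (u\<^sup>2 + v\<^sup>2)"
  defines "Cx \<equiv> (p + S * v\<^sup>2) * dx - S * u * v * dy"
  defines "Cy \<equiv> - S * u * v * dx + (p + S * u\<^sup>2) * dy"
  shows "(p * M + u\<^sup>2 * (e + p)) * (t * Cy + dy) - u * v * (e + p) * (t * Cx + dx) = (t * p + 1) * M * Cy"
proof -
  have hS: "S * (c\<^sup>2 - (u\<^sup>2 + v\<^sup>2)) = e + p" unfolding S_def using A by simp
  show ?thesis unfolding Cx_def Cy_def M_def using hS by algebra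
qed

lemma lin_frac:
  fixes a p t :: real
  assumes k: "t * p + 1 \<noteq> 0"
  shows "((\<lambda>s. a / (s * p + 1)) has_real_derivative - (p / (t * p + 1)) * (a / (t * p + 1))) (at t)"
  apply (rule derivative_eq_intros refl)+
  using k apply simp
  using k by (simp add: field_simps power2_eq_square)

lemma dlin:
  fixes C d t :: real
  shows "((\<lambda>s. s * C + d) has_real_derivative C) (at t)"
  by (auto intro!: derivative_eq_intros)
lemma T_deriv:
  fixes c t \<rho> u v p e dx dy :: real
  assumes c: "c > 0" and adm: "u\<^sup>2 + v\<^sup>2 < c\<^sup>2"
   and k: "t * p + 1 \<noteq> 0"
   and M: "(t * p + 1) * (c\<^sup>2 - (u\<^sup>2 + v\<^sup>2)) + t * (e + p) * (u\<^sup>2 + v\<^sup>2) \<noteq> 0"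
   and D: "1 - (u\<^sup>2 + v\<^sup>2) / (c\<^sup>2 * (t * p + 1)\<^sup>2) > 0"
  shows "admissible c (T c t (\<rho>, u, v, p, e, dx, dy)) \<and>
    ((\<lambda>s. T c s (\<rho>, u, v, p, e, dx, dy)) has_vector_derivative X c (T c t (\<rho>, u, v, p, e, dx, dy))) (at t)"
proof -
  have A: "c\<^sup>2 - (u\<^sup>2 + v\<^sup>2) > 0" using adm by simp
  have c2k: "c\<^sup>2 * (t * p + 1)\<^sup>2 > 0" using c k by simp
  have B: "c\<^sup>2 * (t * p + 1)\<^sup>2 - (u\<^sup>2 + v\<^sup>2) > 0" using D c2k by (simp add: field_simps)
  have B0: "c\<^sup>2 * (t * p + 1)\<^sup>2 - (u\<^sup>2 + v\<^sup>2) \<noteq> 0" using B by simp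
  have fq: "(u / (t * p + 1))\<^sup>2 + (v / (t * p + 1))\<^sup>2 = (u\<^sup>2 + v\<^sup>2) / (t * p + 1)\<^sup>2"
    by (simp add: power_divide add_divide_distrib)
  have adm': "admissible c (T c t (\<rho>, u, v, p, e, dx, dy))"
    unfolding T_closed[OF c adm] admissible_def prod.case fq
    using B k by (simp add: field_simps)
  have dR: "((\<lambda>t. \<rho> * c * sqrt (c\<^sup>2 - (u\<^sup>2 + v\<^sup>2)) * sqrt (1 - (u\<^sup>2 + v\<^sup>2) / (c\<^sup>2 * (t * p + 1)\<^sup>2)) * (t * p + 1)
       / ((t * p + 1) * (c\<^sup>2 - (u\<^sup>2 + v\<^sup>2)) + t * (e + p) * (u\<^sup>2 + v\<^sup>2))) has_real_derivative
     -(\<rho> * c * sqrt (c\<^sup>2 - (u\<^sup>2 + v\<^sup>2)) * sqrt (1 - (u\<^sup>2 + v\<^sup>2) / (c\<^sup>2 * (t * p + 1)\<^sup>2)) * (t * p + 1)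
       / ((t * p + 1) * (c\<^sup>2 - (u\<^sup>2 + v\<^sup>2)) + t * (e + p) * (u\<^sup>2 + v\<^sup>2)))
      * ((e + p) * (c\<^sup>2 * (t * p + 1)\<^sup>2 - (u\<^sup>2 + v\<^sup>2)) / ((t * p + 1) * ((t * p + 1) * (c\<^sup>2 - (u\<^sup>2 + v\<^sup>2)) + t * (e + p) * (u\<^sup>2 + v\<^sup>2))) - p / (t * p + 1))
      * ((u\<^sup>2 + v\<^sup>2) / (t * p + 1)\<^sup>2) / (c\<^sup>2 - (u\<^sup>2 + v\<^sup>2) / (t * p + 1)\<^sup>2)) (at t)"
    by (rule R_deriv[OF c k M B])
  have dE: "((\<lambda>t. (e + p) * (c\<^sup>2 * (t * p + 1)\<^sup>2 - (u\<^sup>2 + v\<^sup>2)) / ((t * p + 1) * ((t * p + 1) * (c\<^sup>2 - (u\<^sup>2 + v\<^sup>2)) + t * (e + p) * (u\<^sup>2 + v\<^sup>2))) - p / (t * p + 1)) has_real_derivative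
     (c\<^sup>2 * (p / (t * p + 1))\<^sup>2 - ((e + p) * (c\<^sup>2 * (t * p + 1)\<^sup>2 - (u\<^sup>2 + v\<^sup>2)) / ((t * p + 1) * ((t * p + 1) * (c\<^sup>2 - (u\<^sup>2 + v\<^sup>2)) + t * (e + p) * (u\<^sup>2 + v\<^sup>2))) - p / (t * p + 1))\<^sup>2 * ((u\<^sup>2 + v\<^sup>2) / (t * p + 1)\<^sup>2))
       / (c\<^sup>2 - (u\<^sup>2 + v\<^sup>2) / (t * p + 1)\<^sup>2)) (at t)"
    by (rule E_deriv[OF k M B])
  show ?thesis
    apply (rule conjI[OF adm'])
    unfolding T_closed[OF c adm] X_def Let_def prod.case
    apply (intro has_vector_derivative_Pair)
          apply (simp_all only: has_real_derivative_iff_has_vector_derivative[symmetric])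
    subgoal by (rule DERIV_cong[OF dR]) (simp add: fq)
    subgoal by (rule lin_frac[OF k])
    subgoal by (rule lin_frac[OF k])
    subgoal by (rule DERIV_cong[OF lin_frac[OF k]]) (simp add: power2_eq_square)
    subgoal by (rule DERIV_cong[OF dE]) (simp add: fq)
    subgoal by (rule DERIV_cong[OF dlin alg_DX[OF k M B0 A refl refl]])
    subgoal by (rule DERIV_cong[OF dlin alg_DY[OF k M B0 A refl refl]])
    done
qed
lemma T_comp:
  fixes c e1 e2 \<rho> u v p e dx dy :: real
  assumes c: "c > 0" and adm: "u\<^sup>2 + v\<^sup>2 < c\<^sup>2"
   and k2: "e2 * p + 1 \<noteq> 0"
   and M2: "(e2 * p + 1) * (c\<^sup>2 - (u\<^sup>2 + v\<^sup>2)) + e2 * (e + p) * (u\<^sup>2 + v\<^sup>2) \<noteq> 0"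
   and D2: "1 - (u\<^sup>2 + v\<^sup>2) / (c\<^sup>2 * (e2 * p + 1)\<^sup>2) > 0"
   and k12: "(e1 + e2) * p + 1 \<noteq> 0"
   and M12: "((e1 + e2) * p + 1) * (c\<^sup>2 - (u\<^sup>2 + v\<^sup>2)) + (e1 + e2) * (e + p) * (u\<^sup>2 + v\<^sup>2) \<noteq> 0"
   and D12: "1 - (u\<^sup>2 + v\<^sup>2) / (c\<^sup>2 * ((e1 + e2) * p + 1)\<^sup>2) > 0"
  shows "T c e1 (T c e2 (\<rho>, u, v, p, e, dx, dy)) = T c (e1 + e2) (\<rho>, u, v, p, e, dx, dy)"
proof -
  define Q where "Q = u\<^sup>2 + v\<^sup>2"
  define A0 where "A0 = c\<^sup>2 - Q"
  define w where "w = e + p"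
  define ka where "ka = e2 * p + 1"
  define kb where "kb = (e1 + e2) * p + 1"
  define Ma where "Ma = ka * A0 + e2 * w * Q"
  define Mb where "Mb = kb * A0 + (e1 + e2) * w * Q"
  define Da where "Da = 1 - Q / (c\<^sup>2 * ka\<^sup>2)"
  define Db where "Db = 1 - Q / (c\<^sup>2 * kb\<^sup>2)"
  define S where "S = w / A0"
  define Cx where "Cx = (p + S * v\<^sup>2) * dx - S * u * v * dy"
  define Cy where "Cy = - S * u * v * dx + (p + S * u\<^sup>2) * dy"
  define Ra where "Ra = \<rho> * c * sqrt A0 * sqrt Da * ka / Ma"
  define Rb where "Rb = \<rho> * c * sqrt A0 * sqrt Db * kb / Mb"
  define Ea where "Ea = w * (c\<^sup>2 * ka\<^sup>2 - Q) / (ka * Ma) - p / ka"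
  define Eb where "Eb = w * (c\<^sup>2 * kb\<^sup>2 - Q) / (kb * Mb) - p / kb"
  define Xa where "Xa = e2 * Cx + dx"
  define Xb where "Xb = (e1 + e2) * Cx + dx"
  define Ya where "Ya = e2 * Cy + dy"
  define Yb where "Yb = (e1 + e2) * Cy + dy"
  have ka0: "ka \<noteq> 0" using k2 ka_def by simp
  have kb0: "kb \<noteq> 0" using k12 kb_def by simp
  have Ma0: "Ma \<noteq> 0" using M2 unfolding Ma_def ka_def A0_def w_def Q_def by simp
  have Mb0: "Mb \<noteq> 0" using M12 unfolding Mb_def kb_def A0_def w_def Q_def by simp
  have Dap: "Da > 0" using D2 unfolding Da_def ka_def Q_def by simp
  have Dbp: "Db > 0" using D12 unfolding Db_def kb_def Q_def by simp
  have A0p: "A0 > 0" using adm unfolding A0_def Q_def by simp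
  have c0: "c \<noteq> 0" using c by simp
  have Ba: "c\<^sup>2 * ka\<^sup>2 - Q \<noteq> 0"
  proof -
    have "c\<^sup>2 * ka\<^sup>2 > 0" using c ka0 by simp
    then show ?thesis using Dap unfolding Da_def by (simp add: field_simps)
  qed
  have adm': "(u / ka)\<^sup>2 + (v / ka)\<^sup>2 < c\<^sup>2"
  proof -
    have "c\<^sup>2 * ka\<^sup>2 > 0" using c ka0 by simp
    then have "Q < c\<^sup>2 * ka\<^sup>2" using Dap unfolding Da_def by (simp add: field_simps)
    moreover have "ka\<^sup>2 > 0" using ka0 by simp
    ultimately have "Q / ka\<^sup>2 < c\<^sup>2" by (simp add: pos_divide_less_eq)
    moreover have "(u / ka)\<^sup>2 + (v / ka)\<^sup>2 = Q / ka\<^sup>2" unfolding Q_def by (simp add: power_divide add_divide_distrib)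
    ultimately show ?thesis by simp
  qed
  have inner: "T c e2 (\<rho>, u, v, p, e, dx, dy) = (Ra, u / ka, v / ka, p / ka, Ea, Xa, Ya)"
    unfolding Ra_def Ea_def Xa_def Ya_def Cx_def Cy_def S_def Ma_def Da_def ka_def A0_def w_def Q_def
    by (rule T_closed[OF c adm])
  have target: "T c (e1 + e2) (\<rho>, u, v, p, e, dx, dy) = (Rb, u / kb, v / kb, p / kb, Eb, Xb, Yb)"
    unfolding Rb_def Eb_def Xb_def Yb_def Cx_def Cy_def S_def Mb_def Db_def kb_def A0_def w_def Q_def
    by (rule T_closed[OF c adm])
  have outer: "T c e1 (Ra, u / ka, v / ka, p / ka, Ea, Xa, Ya) =
    (Ra * c * sqrt (c\<^sup>2 - ((u / ka)\<^sup>2 + (v / ka)\<^sup>2)) * sqrt (1 - ((u / ka)\<^sup>2 + (v / ka)\<^sup>2) / (c\<^sup>2 * (e1 * (p / ka) + 1)\<^sup>2)) * (e1 * (p / ka) + 1)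
       / ((e1 * (p / ka) + 1) * (c\<^sup>2 - ((u / ka)\<^sup>2 + (v / ka)\<^sup>2)) + e1 * (Ea + p / ka) * ((u / ka)\<^sup>2 + (v / ka)\<^sup>2)),
     u / ka / (e1 * (p / ka) + 1), v / ka / (e1 * (p / ka) + 1), p / ka / (e1 * (p / ka) + 1),
     (Ea + p / ka) * (c\<^sup>2 * (e1 * (p / ka) + 1)\<^sup>2 - ((u / ka)\<^sup>2 + (v / ka)\<^sup>2)) / ((e1 * (p / ka) + 1) * ((e1 * (p / ka) + 1) * (c\<^sup>2 - ((u / ka)\<^sup>2 + (v / ka)\<^sup>2)) + e1 * (Ea + p / ka) * ((u / ka)\<^sup>2 + (v / ka)\<^sup>2))) - p / ka / (e1 * (p / ka) + 1),
     e1 * ((p / ka + (Ea + p / ka) / (c\<^sup>2 - ((u / ka)\<^sup>2 + (v / ka)\<^sup>2)) * (v / ka)\<^sup>2) * Xa - (Ea + p / ka) / (c\<^sup>2 - ((u / ka)\<^sup>2 + (v / ka)\<^sup>2)) * (u / ka) * (v / ka) * Ya) + Xa,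
     e1 * (- ((Ea + p / ka) / (c\<^sup>2 - ((u / ka)\<^sup>2 + (v / ka)\<^sup>2))) * (u / ka) * (v / ka) * Xa + (p / ka + (Ea + p / ka) / (c\<^sup>2 - ((u / ka)\<^sup>2 + (v / ka)\<^sup>2)) * (u / ka)\<^sup>2) * Ya) + Ya)"
    by (rule T_closed[OF c adm'])
  have fa: "(u / ka)\<^sup>2 + (v / ka)\<^sup>2 = Q / ka\<^sup>2" unfolding Q_def by (simp add: power_divide add_divide_distrib)
  have fb: "e1 * (p / ka) + 1 = kb / ka" unfolding kb_def using ka0 unfolding ka_def by (simp add: field_simps)
  have fc: "c\<^sup>2 - Q / ka\<^sup>2 = c\<^sup>2 * Da" unfolding Da_def using ka0 c0 by (simp add: field_simps)
  have fd: "sqrt (c\<^sup>2 * Da) = c * sqrt Da" using c by (simp add: real_sqrt_mult)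
  have fe: "1 - Q / ka\<^sup>2 / (c\<^sup>2 * (kb / ka)\<^sup>2) = Db" unfolding Db_def using ka0 kb0 c0 by (simp add: field_simps)
  have ff: "Ea + p / ka = w * (c\<^sup>2 * ka\<^sup>2 - Q) / (ka * Ma)" unfolding Ea_def by simp
  have fg: "kb / ka * (c\<^sup>2 * Da) + e1 * (w * (c\<^sup>2 * ka\<^sup>2 - Q) / (ka * Ma)) * (Q / ka\<^sup>2) = c\<^sup>2 * Da * Mb / Ma"
  proof -
    have "kb * Ma + e1 * w * Q = ka * Mb" unfolding Ma_def Mb_def ka_def kb_def by algebra
    then show ?thesis unfolding Da_def using ka0 Ma0 c0
      by (simp add: field_simps) algebra
  qed
  have fh: "w * (c\<^sup>2 * ka\<^sup>2 - Q) / (ka * Ma) / (c\<^sup>2 * Da) = w * ka / Ma"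
    unfolding Da_def using ka0 Ma0 c0 Ba by (simp add: field_simps power2_eq_square)
  have compR: "Ra * c * (c * sqrt Da) * sqrt Db * (kb / ka) / (c\<^sup>2 * Da * Mb / Ma) = Rb"
    unfolding Ra_def Rb_def using ka0 kb0 Ma0 Mb0 Dap c0 by (simp add: field_simps power2_eq_square)
  have compE: "w * (c\<^sup>2 * ka\<^sup>2 - Q) / (ka * Ma) * (c\<^sup>2 * (kb / ka)\<^sup>2 - Q / ka\<^sup>2) / (kb / ka * (c\<^sup>2 * Da * Mb / Ma)) - p / kb = Eb"
    unfolding Eb_def Da_def using ka0 kb0 Ma0 Mb0 c0 Ba by (simp add: field_simps power2_eq_square)
  have compU: "\<And>x. x / ka / (kb / ka) = x / kb" using ka0 kb0 by simp
  have kx: "(p * Ma + v\<^sup>2 * w) * Xa - u * v * w * Ya = ka * Ma * Cx"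
    unfolding Ma_def Xa_def Ya_def Cx_def Cy_def S_def ka_def A0_def w_def Q_def
    by (rule key_DX) (use A0p in \<open>simp add: A0_def Q_def\<close>)
  have ky: "(p * Ma + u\<^sup>2 * w) * Ya - u * v * w * Xa = ka * Ma * Cy"
    unfolding Ma_def Xa_def Ya_def Cx_def Cy_def S_def ka_def A0_def w_def Q_def
    by (rule key_DY) (use A0p in \<open>simp add: A0_def Q_def\<close>)
  have compX: "e1 * ((p / ka + w * ka / Ma * (v / ka)\<^sup>2) * Xa - w * ka / Ma * (u / ka) * (v / ka) * Ya) + Xa = Xb"
  proof -
    have "e1 * ((p / ka + w * ka / Ma * (v / ka)\<^sup>2) * Xa - w * ka / Ma * (u / ka) * (v / ka) * Ya) + Xa
       = e1 * (((p * Ma + v\<^sup>2 * w) * Xa - u * v * w * Ya) / (ka * Ma)) + Xa"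
      using ka0 Ma0 by (simp add: field_simps power2_eq_square)
    also have "\<dots> = e1 * Cx + Xa" unfolding kx using ka0 Ma0 by simp
    finally show ?thesis unfolding Xa_def Xb_def by (simp add: algebra_simps)
  qed
  have compY: "e1 * (- (w * ka / Ma) * (u / ka) * (v / ka) * Xa + (p / ka + w * ka / Ma * (u / ka)\<^sup>2) * Ya) + Ya = Yb"
  proof -
    have "e1 * (- (w * ka / Ma) * (u / ka) * (v / ka) * Xa + (p / ka + w * ka / Ma * (u / ka)\<^sup>2) * Ya) + Ya
       = e1 * (((p * Ma + u\<^sup>2 * w) * Ya - u * v * w * Xa) / (ka * Ma)) + Ya"
      using ka0 Ma0 by (simp add: field_simps power2_eq_square)
    also have "\<dots> = e1 * Cy + Ya" unfolding ky using ka0 Ma0 by simp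
    finally show ?thesis unfolding Ya_def Yb_def by (simp add: algebra_simps)
  qed
  show ?thesis
    unfolding inner outer target
    unfolding fa fb fc fd fe ff fg fh
    unfolding compR compE compU compX compY ..
qed
lemma dom_facts:
  assumes "eps_dom c (\<rho>, u, v, p, e, dx, dy) t"
  shows "t * p + 1 \<noteq> 0"
    "(t * p + 1) * (c\<^sup>2 - (u\<^sup>2 + v\<^sup>2)) + t * (e + p) * (u\<^sup>2 + v\<^sup>2) \<noteq> 0"
    "1 - (u\<^sup>2 + v\<^sup>2) / (c\<^sup>2 * (t * p + 1)\<^sup>2) > 0"
  using assms unfolding eps_dom_def Dtil_def Let_def prod.case by auto

theorem mainTheorem3:
  fixes c :: real
  assumes "c > 0"
  shows "(\<forall>z. admissible c z \<longrightarrow> eps_dom c z 0 \<and> T c 0 z = z)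
    \<and> (\<forall>z \<epsilon>1 \<epsilon>2. admissible c z \<longrightarrow> eps_dom c z \<epsilon>2
          \<longrightarrow> eps_dom c (T c \<epsilon>2 z) \<epsilon>1 \<longrightarrow> eps_dom c z (\<epsilon>1 + \<epsilon>2)
          \<longrightarrow> T c \<epsilon>1 (T c \<epsilon>2 z) = T c (\<epsilon>1 + \<epsilon>2) z)
    \<and> (\<forall>z \<epsilon>. admissible c z \<longrightarrow> eps_dom c z \<epsilon>
          \<longrightarrow> admissible c (T c \<epsilon> z)
            \<and> ((\<lambda>t. T c t z) has_vector_derivative X c (T c \<epsilon> z)) (at \<epsilon>))"
proof (intro conjI allI impI)
  fix z assume adm: "admissible c z"
  obtain \<rho> u v p e dx dy where z: "z = (\<rho>, u, v, p, e, dx, dy)" by (cases z) auto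
  have a: "u\<^sup>2 + v\<^sup>2 < c\<^sup>2" using adm unfolding z admissible_def by simp
  have c2: "c\<^sup>2 > 0" using assms by simp
  have "(u\<^sup>2 + v\<^sup>2) / c\<^sup>2 < 1" using a c2 by (simp add: divide_less_eq)
  then show "eps_dom c z 0" unfolding z eps_dom_def Dtil_def Let_def prod.case using a by simp
next
  fix z assume adm: "admissible c z"
  obtain \<rho> u v p e dx dy where z: "z = (\<rho>, u, v, p, e, dx, dy)" by (cases z) auto
  have a: "u\<^sup>2 + v\<^sup>2 < c\<^sup>2" using adm unfolding z admissible_def by simp
  have A: "c\<^sup>2 - (u\<^sup>2 + v\<^sup>2) > 0" using a by simp
  have c0: "c \<noteq> 0" using assms by simp
  have sq: "sqrt (1 - (u\<^sup>2 + v\<^sup>2) / (c\<^sup>2 * (0 * p + 1)\<^sup>2)) = sqrt (c\<^sup>2 - (u\<^sup>2 + v\<^sup>2)) / c"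
  proof -
    have "1 - (u\<^sup>2 + v\<^sup>2) / (c\<^sup>2 * (0 * p + 1)\<^sup>2) = (c\<^sup>2 - (u\<^sup>2 + v\<^sup>2)) / c\<^sup>2"
      using c0 by (simp add: field_simps)
    then show ?thesis using assms by (simp add: real_sqrt_divide)
  qed
  have ss: "sqrt (c\<^sup>2 - (u\<^sup>2 + v\<^sup>2)) * sqrt (c\<^sup>2 - (u\<^sup>2 + v\<^sup>2)) = c\<^sup>2 - (u\<^sup>2 + v\<^sup>2)"
    using A by simp
  have r: "\<rho> * c * sqrt (c\<^sup>2 - (u\<^sup>2 + v\<^sup>2)) * (sqrt (c\<^sup>2 - (u\<^sup>2 + v\<^sup>2)) / c) * (0 * p + 1)
       / ((0 * p + 1) * (c\<^sup>2 - (u\<^sup>2 + v\<^sup>2)) + 0 * (e + p) * (u\<^sup>2 + v\<^sup>2)) = \<rho>"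
  proof -
    have "\<rho> * c * sqrt (c\<^sup>2 - (u\<^sup>2 + v\<^sup>2)) * (sqrt (c\<^sup>2 - (u\<^sup>2 + v\<^sup>2)) / c) * (0 * p + 1)
       / ((0 * p + 1) * (c\<^sup>2 - (u\<^sup>2 + v\<^sup>2)) + 0 * (e + p) * (u\<^sup>2 + v\<^sup>2))
       = \<rho> * (sqrt (c\<^sup>2 - (u\<^sup>2 + v\<^sup>2)) * sqrt (c\<^sup>2 - (u\<^sup>2 + v\<^sup>2))) / (c\<^sup>2 - (u\<^sup>2 + v\<^sup>2))"
      using c0 by simp
    also have "\<dots> = \<rho>" unfolding ss using A by simp
    finally show ?thesis .
  qed
  have ee: "(e + p) * (c\<^sup>2 * (0 * p + 1)\<^sup>2 - (u\<^sup>2 + v\<^sup>2)) / ((0 * p + 1) * ((0 * p + 1) * (c\<^sup>2 - (u\<^sup>2 + v\<^sup>2)) + 0 * (e + p) * (u\<^sup>2 + v\<^sup>2))) - p / (0 * p + 1) = e"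
    using A by simp
  show "T c 0 z = z" unfolding z T_closed[OF assms a] sq r ee by simp
next
  fix z \<epsilon>1 \<epsilon>2
  assume adm: "admissible c z" and d2: "eps_dom c z \<epsilon>2"
    and d1: "eps_dom c (T c \<epsilon>2 z) \<epsilon>1" and d12: "eps_dom c z (\<epsilon>1 + \<epsilon>2)"
  obtain \<rho> u v p e dx dy where z: "z = (\<rho>, u, v, p, e, dx, dy)" by (cases z) auto
  have a: "u\<^sup>2 + v\<^sup>2 < c\<^sup>2" using adm unfolding z admissible_def by simp
  show "T c \<epsilon>1 (T c \<epsilon>2 z) = T c (\<epsilon>1 + \<epsilon>2) z" unfolding z
    by (rule T_comp[OF assms a dom_facts[OF d2[unfolded z]] dom_facts[OF d12[unfolded z]]])
next
  fix z \<epsilon>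
  assume adm: "admissible c z" and d: "eps_dom c z \<epsilon>"
  obtain \<rho> u v p e dx dy where z: "z = (\<rho>, u, v, p, e, dx, dy)" by (cases z) auto
  have a: "u\<^sup>2 + v\<^sup>2 < c\<^sup>2" using adm unfolding z admissible_def by simp
  note r = T_deriv[OF assms a dom_facts[OF d[unfolded z]], of \<rho> dx dy]
  show "admissible c (T c \<epsilon> z)" unfolding z using r by simp
  show "((\<lambda>t. T c t z) has_vector_derivative X c (T c \<epsilon> z)) (at \<epsilon>)" unfolding z using r by simp
qed

end
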